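(* Let $L$ be a finite-dimensional solvable, non-nilpotent Lie algebra over a finite field $\mathbb{F}_q$. If $\dim\mathrm{nil}(L)$ is even and divides $\dim\mathrm{nil}_L(x)$ for all $x\in L$, then $\Gamma_{\mathfrak{N}}(L)$ is not Eulerian.
   Context: $\langle a,b\rangle$ denotes the Lie subalgebra generated by $a,b$; $\mathrm{nil}_L(h)=\{x\in L\mid \langle h,x\rangle \text{ is nilpotent}\}$ and $\mathrm{nil}(L)=\{x\in L\mid \langle h,x\rangle \text{ is nilpotent for all } h\in L\}$ (here assumed to be subspaces so that their dimensions make sense). The nilpotent graph $\Gamma_{\mathfrak{N}}(L)$ is the simple undirected graph with vertex set $L\setminus\mathrm{nil}(L)$ in which distinct vertices $x,y$ are adjacent iff $\langle x,y\rangle$ is nilpotent. A graph is Eulerian if it has a closed walk using every edge exactly once (equivalently, for a connected graph, every vertex has even degree). *)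

theory Defs
  imports Main "HOL.Vector_Spaces"
begin

definition lie_algebra :: "('k::field \<Rightarrow> 'L::ab_group_add \<Rightarrow> 'L) \<Rightarrow> ('L \<Rightarrow> 'L \<Rightarrow> 'L) \<Rightarrow> bool" where
  "lie_algebra sc br \<longleftrightarrow> vector_space sc
     \<and> (\<forall>x y z. br (x + y) z = br x z + br y z)
     \<and> (\<forall>x y z. br x (y + z) = br x y + br x z)
     \<and> (\<forall>a x y. br (sc a x) y = sc a (br x y))
     \<and> (\<forall>a x y. br x (sc a y) = sc a (br x y))
     \<and> (\<forall>x. br x x = 0)
     \<and> (\<forall>x y z. br x (br y z) + br y (br z x) + br z (br x y) = 0)"

definition fin_dim :: "('k::field \<Rightarrow> 'L::ab_group_add \<Rightarrow> 'L) \<Rightarrow> bool" where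
  "fin_dim sc \<longleftrightarrow> (\<exists>B. finite B \<and> module.span sc B = UNIV)"

definition subalgebra :: "('k::field \<Rightarrow> 'L::ab_group_add \<Rightarrow> 'L) \<Rightarrow> ('L \<Rightarrow> 'L \<Rightarrow> 'L) \<Rightarrow> 'L set \<Rightarrow> bool" where
  "subalgebra sc br S \<longleftrightarrow> module.subspace sc S \<and> (\<forall>x\<in>S. \<forall>y\<in>S. br x y \<in> S)"

definition gen2 :: "('k::field \<Rightarrow> 'L::ab_group_add \<Rightarrow> 'L) \<Rightarrow> ('L \<Rightarrow> 'L \<Rightarrow> 'L) \<Rightarrow> 'L \<Rightarrow> 'L \<Rightarrow> 'L set" where
  "gen2 sc br a b = \<Inter>{S. subalgebra sc br S \<and> a \<in> S \<and> b \<in> S}"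

text \<open>Lower central series of a subalgebra S: S^1 = S, S^(k+1) = span [S, S^k]
 (indexed from 0 here).\<close>
fun lcs :: "('k::field \<Rightarrow> 'L::ab_group_add \<Rightarrow> 'L) \<Rightarrow> ('L \<Rightarrow> 'L \<Rightarrow> 'L) \<Rightarrow> 'L set \<Rightarrow> nat \<Rightarrow> 'L set" where
  "lcs sc br S 0 = S"
| "lcs sc br S (Suc k) = module.span sc {br x y | x y. x \<in> S \<and> y \<in> lcs sc br S k}"

definition nilpotent_alg :: "('k::field \<Rightarrow> 'L::ab_group_add \<Rightarrow> 'L) \<Rightarrow> ('L \<Rightarrow> 'L \<Rightarrow> 'L) \<Rightarrow> 'L set \<Rightarrow> bool" where
  "nilpotent_alg sc br S \<longleftrightarrow> (\<exists>k. lcs sc br S k = {0})"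

fun derived :: "('k::field \<Rightarrow> 'L::ab_group_add \<Rightarrow> 'L) \<Rightarrow> ('L \<Rightarrow> 'L \<Rightarrow> 'L) \<Rightarrow> nat \<Rightarrow> 'L set" where
  "derived sc br 0 = UNIV"
| "derived sc br (Suc k) = module.span sc {br x y | x y. x \<in> derived sc br k \<and> y \<in> derived sc br k}"

definition solvable_alg :: "('k::field \<Rightarrow> 'L::ab_group_add \<Rightarrow> 'L) \<Rightarrow> ('L \<Rightarrow> 'L \<Rightarrow> 'L) \<Rightarrow> bool" where
  "solvable_alg sc br \<longleftrightarrow> (\<exists>k. derived sc br k = {0})"

definition nilL :: "('k::field \<Rightarrow> 'L::ab_group_add \<Rightarrow> 'L) \<Rightarrow> ('L \<Rightarrow> 'L \<Rightarrow> 'L) \<Rightarrow> 'L \<Rightarrow> 'L set" where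
  "nilL sc br h = {x. nilpotent_alg sc br (gen2 sc br h x)}"

definition nil :: "('k::field \<Rightarrow> 'L::ab_group_add \<Rightarrow> 'L) \<Rightarrow> ('L \<Rightarrow> 'L \<Rightarrow> 'L) \<Rightarrow> 'L set" where
  "nil sc br = {x. \<forall>h. nilpotent_alg sc br (gen2 sc br h x)}"

definition graph_edges :: "'a set \<Rightarrow> ('a \<Rightarrow> 'a \<Rightarrow> bool) \<Rightarrow> 'a set set" where
  "graph_edges V E = {{x, y} | x y. x \<in> V \<and> y \<in> V \<and> x \<noteq> y \<and> E x y}"

definition walk_edges :: "'a list \<Rightarrow> 'a set list" where
  "walk_edges ws = map (\<lambda>i. {ws ! i, ws ! Suc i}) [0..<length ws - 1]"

definition eulerian :: "'a set \<Rightarrow> ('a \<Rightarrow> 'a \<Rightarrow> bool) \<Rightarrow> bool" where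
  "eulerian V E \<longleftrightarrow> (\<exists>ws. ws \<noteq> [] \<and> set ws \<subseteq> V \<and> hd ws = last ws
      \<and> (\<forall>i < length ws - 1. ws ! i \<noteq> ws ! Suc i \<and> E (ws ! i) (ws ! Suc i))
      \<and> distinct (walk_edges ws) \<and> set (walk_edges ws) = graph_edges V E)"

definition nilpotent_graph_eulerian :: "('k::field \<Rightarrow> 'L::ab_group_add \<Rightarrow> 'L) \<Rightarrow> ('L \<Rightarrow> 'L \<Rightarrow> 'L) \<Rightarrow> bool" where
  "nilpotent_graph_eulerian sc br \<longleftrightarrow>
     eulerian (UNIV - nil sc br) (\<lambda>x y. nilpotent_alg sc br (gen2 sc br x y))"

end

theory Submission
  imports Defs "HOL-Library.FuncSet"
begin

lemma even_card_involution:
  assumes "finite A" "\<forall>x\<in>A. f x \<in> A \<and> f (f x) = x \<and> f x \<noteq> x"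
  shows "even (card A)"
  using assms
proof (induction "card A" arbitrary: A rule: less_induct)
  case less
  show ?case
  proof (cases "A = {}")
    case True then show ?thesis by simp
  next
    case False
    then obtain a where a: "a \<in> A" by blast
    let ?B = "A - {a, f a}"
    have fa: "f a \<in> A" "f a \<noteq> a" using less.prems a by auto
    have cB: "card A = card ?B + 2"
    proof -
      have 1: "card ?B = card A - card {a, f a}"
        by (rule card_Diff_subset) (use a fa in auto)
      have 2: "card {a, f a} \<le> card A"
        by (rule card_mono) (use less.prems(1) a fa in auto)
      have 3: "card {a, f a} = 2" using fa by simp
      show ?thesis using 1 2 3 by linarith
    qed
    have "even (card ?B)"
    proof (rule less.hyps)
      show "card ?B < card A" using cB by simp
      show "finite ?B" using less.prems by simp
      show "\<forall>x\<in>?B. f x \<in> ?B \<and> f (f x) = x \<and> f x \<noteq> x"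
      proof (intro ballI conjI)
        fix y assume y: "y \<in> ?B"
        then have yA: "y \<in> A" by simp
        from less.prems(2) yA have h: "f y \<in> A" "f (f y) = y" "f y \<noteq> y" by auto
        have ffa: "f (f a) = a" using less.prems(2) a by auto
        have n1: "f y \<noteq> a"
        proof
          assume "f y = a" then have "y = f a" using h(2) by simp
          with y show False by simp
        qed
        have n2: "f y \<noteq> f a"
        proof
          assume "f y = f a" then have "f (f y) = f (f a)" by simp
          then have "y = a" using h(2) ffa by simp
          with y show False by simp
        qed
        show "f y \<in> ?B" using h(1) n1 n2 by simp
        show "f (f y) = y" by (rule h(2))
        show "f y \<noteq> y" by (rule h(3))
      qed
    qed
    then show ?thesis using cB by simp
  qed
qed

lemma closed_walk_even:
  assumes "ws \<noteq> []" "hd ws = last ws" "\<forall>i < length ws - 1. ws ! i \<noteq> ws ! Suc i"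
  shows "even (length (filter (\<lambda>e. x \<in> e) (walk_edges ws)))"
proof -
  define n where "n = length ws - 1"
  have len: "length ws = Suc n" using assms(1) n_def by simp
  have w0: "ws ! 0 = ws ! n"
    using assms(1,2) len by (simp add: hd_conv_nth last_conv_nth)
  have "length (filter (\<lambda>e. x \<in> e) (walk_edges ws))
      = card {i. i < n \<and> x \<in> {ws ! i, ws ! Suc i}}"
    unfolding walk_edges_def n_def[symmetric]
    apply (simp add: length_filter_conv_card)
    apply (rule arg_cong[where f=card])
    apply (rule Collect_cong)
    apply auto
    done
  also have "{i. i < n \<and> x \<in> {ws ! i, ws ! Suc i}}
      = {i. i < n \<and> ws ! i = x} \<union> {i. i < n \<and> ws ! Suc i = x}" by auto
  also have "card ({i. i < n \<and> ws ! i = x} \<union> {i. i < n \<and> ws ! Suc i = x})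
      = card {i. i < n \<and> ws ! i = x} + card {i. i < n \<and> ws ! Suc i = x}"
    by (rule card_Un_disjoint) (use assms(3) n_def in auto)
  also have "card {i. i < n \<and> ws ! Suc i = x} = card {i. i < n \<and> ws ! i = x}"
  proof -
    have "card {i. i < n \<and> ws ! Suc i = x} = card (Suc ` {i. i < n \<and> ws ! Suc i = x})"
      by (simp add: card_image)
    also have "Suc ` {i. i < n \<and> ws ! Suc i = x} = {j. 0 < j \<and> j \<le> n \<and> ws ! j = x}"
      apply (auto simp: image_iff)
      subgoal for j by (rule exI[of _ "j - 1"]) auto
      done
    also have "card {j. 0 < j \<and> j \<le> n \<and> ws ! j = x} = card {i. i < n \<and> ws ! i = x}"
    proof (cases "n = 0")
      case True
      then have "{j. 0 < j \<and> j \<le> n \<and> ws ! j = x} = {}" "{i. i < n \<and> ws ! i = x} = {}" by auto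
      then show ?thesis by (simp only: card.empty)
    next
      case False
      show ?thesis
      proof (cases "ws ! n = x")
        case True
        have "{j. 0 < j \<and> j \<le> n \<and> ws ! j = x} = insert n {j. 0 < j \<and> j < n \<and> ws ! j = x}"
          using True False by auto
        moreover have "{i. i < n \<and> ws ! i = x} = insert 0 {j. 0 < j \<and> j < n \<and> ws ! j = x}"
          using True False w0 by auto
        moreover have fin: "finite {j. 0 < j \<and> j < n \<and> ws ! j = x}"
          by (rule finite_subset[of _ "{..<n}"]) auto
        ultimately show ?thesis by simp
      next
        case nT: False
        have "{j. 0 < j \<and> j \<le> n \<and> ws ! j = x} = {j. 0 < j \<and> j < n \<and> ws ! j = x}"
          using nT le_neq_implies_less by (auto, metis le_neq_implies_less)
        moreover have "{i. i < n \<and> ws ! i = x} = {j. 0 < j \<and> j < n \<and> ws ! j = x}"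
        proof -
          have "0 < i" if "ws ! i = x" for i using nT w0 that by (cases i) auto
          then show ?thesis by auto
        qed
        ultimately show ?thesis by simp
      qed
    qed
    finally show ?thesis .
  qed
  finally show ?thesis by simp
qed


lemma gen2_sym: "gen2 sc br a b = gen2 sc br b a"
  unfolding gen2_def by (rule arg_cong[where f=Inter]) auto

lemma gen2_self_nilpotent:
  assumes "lie_algebra sc br"
  shows "nilpotent_alg sc br (gen2 sc br x x)"
proof -
  interpret V: vector_space sc using assms unfolding lie_algebra_def by simp
  have bl: "br (sc a u) v = sc a (br u v)" "br u (sc a v) = sc a (br u v)" "br u u = 0" for a u v
    using assms unfolding lie_algebra_def by auto
  let ?S = "V.span {x}"
  have sub: "subalgebra sc br ?S"
    unfolding subalgebra_def
  proof (intro conjI ballI)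
    show "V.subspace ?S" by simp
    fix u v assume "u \<in> ?S" "v \<in> ?S"
    then obtain a b where "u = sc a x" "v = sc b x" unfolding V.span_singleton by auto
    then have "br u v = 0" using bl by simp
    then show "br u v \<in> ?S" using V.span_zero by simp
  qed
  have xS: "x \<in> ?S" by (simp add: V.span_base)
  have G: "gen2 sc br x x \<subseteq> ?S" unfolding gen2_def using sub xS by blast
  have "{br u v | u v. u \<in> gen2 sc br x x \<and> v \<in> lcs sc br (gen2 sc br x x) 0} \<subseteq> {0}"
  proof
    fix w assume "w \<in> {br u v | u v. u \<in> gen2 sc br x x \<and> v \<in> lcs sc br (gen2 sc br x x) 0}"
    then obtain u v where w: "w = br u v" "u \<in> ?S" "v \<in> ?S" using G by auto
    then obtain a b where "u = sc a x" "v = sc b x" unfolding V.span_singleton by auto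
    then show "w \<in> {0}" using w bl by simp
  qed
  then have "lcs sc br (gen2 sc br x x) (Suc 0) \<subseteq> {0}"
    using V.span_mono[of _ "{0}"] by (simp add: V.span_mono)
  then have "lcs sc br (gen2 sc br x x) (Suc 0) = {0}"
    using V.span_zero by auto
  then show ?thesis unfolding nilpotent_alg_def by blast
qed

theorem corollary4p9:
  fixes sc :: "'k::{field, finite} \<Rightarrow> 'L::ab_group_add \<Rightarrow> 'L"
    and br :: "'L \<Rightarrow> 'L \<Rightarrow> 'L"
  assumes "lie_algebra sc br"
    and "fin_dim sc"
    and "solvable_alg sc br"
    and "\<not> nilpotent_alg sc br UNIV"
    and "module.subspace sc (nil sc br)"
    and "\<forall>x. module.subspace sc (nilL sc br x)"
    and "even (vector_space.dim sc (nil sc br))"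
    and "\<forall>x. vector_space.dim sc (nil sc br) dvd vector_space.dim sc (nilL sc br x)"
  shows "\<not> nilpotent_graph_eulerian sc br"
proof
  assume eul: "nilpotent_graph_eulerian sc br"
  interpret V: vector_space sc using assms(1) unfolding lie_algebra_def by simp
  have finL: "finite (UNIV :: 'L set)"
  proof -
    obtain B where B: "finite B" "V.span B = UNIV" using assms(2) unfolding fin_dim_def by blast
    let ?f = "\<lambda>u. \<Sum>v\<in>B. sc (u v) v"
    have "UNIV \<subseteq> ?f ` (PiE B (\<lambda>_. UNIV))"
    proof
      fix w :: 'L
      have "w \<in> V.span B" using B(2) by simp
      then obtain u where w: "w = ?f u" unfolding V.span_finite[OF B(1)] by blast
      have "?f (restrict u B) = ?f u" by (rule sum.cong) simp_all
      moreover have "restrict u B \<in> PiE B (\<lambda>_. UNIV)" by simp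
      ultimately show "w \<in> ?f ` (PiE B (\<lambda>_. UNIV))" unfolding w by (rule image_eqI[OF sym])
    qed
    moreover have "finite (?f ` (PiE B (\<lambda>_. UNIV)))"
      by (rule finite_imageI, rule finite_PiE) (use B(1) in simp_all)
    ultimately show ?thesis by (rule finite_subset)
  qed
  have dim0: "V.dim S = 0 \<longleftrightarrow> S \<subseteq> {0}" for S
  proof -
    obtain B where B: "B \<subseteq> S" "V.independent B" "S \<subseteq> V.span B" "card B = V.dim S"
      by (rule V.basis_exists)
    have fB: "finite B" using finite_subset[OF subset_UNIV finL] .
    have z: "0 \<notin> B" using B(2) V.dependent_zero by blast
    show ?thesis
    proof
      assume "V.dim S = 0" then have "B = {}" using B(4) fB by simp
      then show "S \<subseteq> {0}" using B(3) by simp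
    next
      assume "S \<subseteq> {0}" then have "B = {}" using B(1) z by blast
      then show "V.dim S = 0" using B(4) by simp
    qed
  qed
  define N where "N = nil sc br"
  define E where "E = (\<lambda>x y. nilpotent_alg sc br (gen2 sc br x y))"
  from eul obtain ws where ws: "ws \<noteq> []" "set ws \<subseteq> UNIV - N" "hd ws = last ws"
      "\<forall>i < length ws - 1. ws ! i \<noteq> ws ! Suc i \<and> E (ws ! i) (ws ! Suc i)"
      "distinct (walk_edges ws)" "set (walk_edges ws) = graph_edges (UNIV - N) E"
    unfolding nilpotent_graph_eulerian_def eulerian_def N_def E_def by blast
  define x where "x = hd ws"
  have xN: "x \<notin> N" using ws(1,2) x_def hd_in_set by blast
  define M where "M = nilL sc br x"
  have xM: "x \<in> M" unfolding M_def nilL_def using gen2_self_nilpotent[OF assms(1)] by simp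
  have NM: "N \<subseteq> M" unfolding N_def M_def nil_def nilL_def by auto
  have subN: "V.subspace N" using assms(5) N_def by simp
  have subM: "V.subspace M" using assms(6) M_def by simp
  have zN: "0 \<in> N" using subN V.subspace_0 by blast
  have x0: "x \<noteq> 0" using xN zN by auto
  have "V.dim N \<noteq> 0"
  proof
    assume "V.dim N = 0"
    then have "V.dim M = 0" using assms(8) N_def M_def by (metis dvd_0_left_iff)
    then have "M \<subseteq> {0}" using dim0[of M] by simp
    then show False using xM x0 by auto
  qed
  then have "\<not> N \<subseteq> {0}" using dim0[of N] by simp
  then obtain s where s: "s \<in> N" "s \<noteq> 0" by blast
  have finM: "finite M" "finite N" using finite_subset[OF subset_UNIV finL] by auto
  have par: "even (card M) = even (card N)"
  proof (cases "(1::'k) + 1 = 0")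
    case True
    have ev: "even (card S)" if "V.subspace S" "s \<in> S" "finite S" for S
    proof (rule even_card_involution[where f = "\<lambda>y. y + s"])
      show "finite S" by fact
      have ss: "s + s = 0"
      proof -
        have "s + s = sc (1 + 1) s" by (simp only: V.scale_left_distrib V.scale_one)
        then show ?thesis using True by simp
      qed
      show "\<forall>y\<in>S. y + s \<in> S \<and> y + s + s = y \<and> y + s \<noteq> y"
        using that V.subspace_add ss s(2) by (simp add: add.assoc)
    qed
    show ?thesis using ev[OF subM] ev[OF subN] s NM finM by auto
  next
    case False
    have od: "odd (card S)" if "V.subspace S" "finite S" for S
    proof -
      have "even (card (S - {0}))"
      proof (rule even_card_involution[where f = uminus])
        show "finite (S - {0})" using that by simp
        show "\<forall>y\<in>S - {0}. - y \<in> S - {0} \<and> - (- y) = y \<and> - y \<noteq> y"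
        proof
          fix y assume y: "y \<in> S - {0}"
          have "- y \<noteq> y"
          proof
            assume "- y = y"
            then have "y + y = 0" by (metis add.right_inverse)
            moreover have "y + y = sc (1 + 1) y" by (simp only: V.scale_left_distrib V.scale_one)
            ultimately show False using False y by simp
          qed
          then show "- y \<in> S - {0} \<and> - (- y) = y \<and> - y \<noteq> y"
            using y V.subspace_neg[OF that(1)] by auto
        qed
      qed
      moreover have "card S = card (S - {0}) + 1"
        using that V.subspace_0[OF that(1)] by (metis card_Suc_Diff1 Suc_eq_plus1)
      ultimately show ?thesis by simp
    qed
    show ?thesis using od[OF subM] od[OF subN] finM by auto
  qed
  define Nb where "Nb = M - N - {x}"
  have edges: "{e \<in> graph_edges (UNIV - N) E. x \<in> e} = (\<lambda>y. {x, y}) ` Nb"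
  proof (intro equalityI subsetI)
    fix e assume "e \<in> {e \<in> graph_edges (UNIV - N) E. x \<in> e}"
    then obtain a b where e: "e = {a, b}" "a \<notin> N" "b \<notin> N" "a \<noteq> b" "E a b" "x \<in> e"
      unfolding graph_edges_def by auto
    show "e \<in> (\<lambda>y. {x, y}) ` Nb"
    proof (cases "x = a")
      case True
      then have "b \<in> Nb" using e unfolding Nb_def M_def nilL_def E_def by auto
      then show ?thesis using e True by blast
    next
      case False
      then have xb: "x = b" using e by auto
      then have "a \<in> Nb" using e False gen2_sym[of sc br a b]
        unfolding Nb_def M_def nilL_def E_def by auto
      then show ?thesis using e xb by (simp add: insert_commute image_iff) blast
    qed
  next
    fix e assume "e \<in> (\<lambda>y. {x, y}) ` Nb"
    then obtain y where y: "e = {x, y}" "y \<in> Nb" by blast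
    then show "e \<in> {e \<in> graph_edges (UNIV - N) E. x \<in> e}"
      unfolding graph_edges_def Nb_def M_def nilL_def E_def using xN by auto
  qed
  have "card ((\<lambda>y. {x, y}) ` Nb) = card Nb"
    by (rule card_image) (auto simp: inj_on_def doubleton_eq_iff Nb_def)
  moreover have "card Nb = card M - card N - 1"
  proof -
    have "card (M - N) = card M - card N" using NM finM by (simp add: card_Diff_subset)
    moreover have "card (M - N - {x}) = card (M - N) - 1" using xM xN by simp
    ultimately show ?thesis unfolding Nb_def by simp
  qed
  moreover have "card N \<le> card M" using NM finM by (simp add: card_mono)
  moreover have "card N < card M"
    using NM finM xM xN by (metis psubsetI psubset_card_mono)
  ultimately have oddc: "odd (card {e \<in> graph_edges (UNIV - N) E. x \<in> e})"
    using edges par by (auto simp: even_diff_nat)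
  have "length (filter (\<lambda>e. x \<in> e) (walk_edges ws)) = card ({e. x \<in> e} \<inter> set (walk_edges ws))"
    using ws(5) by (rule distinct_length_filter)
  also have "{e. x \<in> e} \<inter> set (walk_edges ws) = {e \<in> graph_edges (UNIV - N) E. x \<in> e}"
    using ws(6) by auto
  finally have "odd (length (filter (\<lambda>e. x \<in> e) (walk_edges ws)))" using oddc by simp
  moreover have "even (length (filter (\<lambda>e. x \<in> e) (walk_edges ws)))"
    using closed_walk_even[OF ws(1,3)] ws(4) by blast
  ultimately show False by simp
qed

end
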